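(* For every $\mu\in\mathcal{M}^+_0$, $$\frac14\int_0^{2\pi}\!\!\int_0^{2\pi}\sin|\theta-\alpha|\,d\mu(\theta)\,d\mu(\alpha) \;=\; \pi\sum_{n\in\mathbb{Z},\,n\neq\pm1}\frac{|\hat\mu(n)|^2}{1-n^2},$$ where $\hat\mu(n)=\frac{1}{2\pi}\int_{\mathbb{S}^1}e^{-in\theta}d\mu(\theta)$. Equivalently, writing $c_n=\int_{\mathbb{S}^1}e^{-in\theta}d\mu(\theta)$, the left-hand side equals $\frac{1}{4\pi}\sum_{n\neq\pm1}\frac{|c_n|^2}{1-n^2}$.
   Context: $\mathbb{S}^1$ is identified with $[0,2\pi)$. $\mathcal{M}^+_0$ is the set of positive finite Radon measures $\mu$ on $\mathbb{S}^1$ with $\int_{\mathbb{S}^1}e^{i\theta}d\mu(\theta)=0$. The left-hand side is the quantity $A_{max}(\mu)$, which for measures not supported on a pair of antipodal points equals the maximal signed area among closed Lipschitz curves with length measure $\mu$. *)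

theory Defs
  imports "HOL-Analysis.Analysis"
begin

text \<open>The circle S^1 identified with [0, 2 pi).\<close>
definition S1 :: "real set" where
  "S1 = {0..<2*pi}"

text \<open>M_0^+: positive finite (Radon = finite Borel, S^1 compact metric) measures on S^1
  with vanishing first moment.\<close>
definition M0plus :: "real measure set" where
  "M0plus = {\<mu>. sets \<mu> = sets (restrict_space borel S1) \<and> finite_measure \<mu> \<and>
               (\<integral>\<theta>. exp (\<i> * complex_of_real \<theta>) \<partial>\<mu>) = 0}"

definition fourier_coeff :: "real measure \<Rightarrow> int \<Rightarrow> complex" where
  "fourier_coeff \<mu> n = complex_of_real (1 / (2*pi)) *
      (\<integral>\<theta>. exp (- \<i> * of_int n * complex_of_real \<theta>) \<partial>\<mu>)"

end

theory Submission
  imports Defs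
begin

lemma log_series:
  fixes z :: complex assumes "norm z < 1"
  shows "(\<lambda>n. z^(Suc n)/of_nat (Suc n)) sums (- Ln(1-z))"
proof -
  have "(\<lambda>n. - ((z)^n) / of_nat n) sums ln (1 - z)"
    using Ln_series'[of "-z"] assms by simp
  then have "(\<lambda>n. z^n / of_nat n) sums (- ln (1 - z))"
    using sums_minus by fastforce
  then show ?thesis
    by (subst sums_Suc_iff) simp
qed

lemma P_closed:
  fixes z :: complex assumes "norm z < 1" "z \<noteq> 0"
  shows "(\<lambda>m. z^(m+2)/of_nat((m+1)*(m+3))) sums ((-(z - 1/z) * Ln(1-z) + 1 + z/2)/2)"
proof -
  define L where "L = - Ln(1-z)"
  have A: "(\<lambda>n. z^(Suc n)/of_nat (Suc n)) sums L" using log_series assms L_def by simp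
  have B1: "(\<lambda>n. z^(Suc (Suc n))/of_nat (Suc (Suc n))) sums (L - z)"
    using A by (subst sums_Suc_iff) simp
  have B: "(\<lambda>n. z^(Suc (Suc (Suc n)))/of_nat (Suc (Suc (Suc n)))) sums (L - z - z^2/2)"
    using B1 by (subst sums_Suc_iff) (simp add: numeral_2_eq_2)
  have C: "(\<lambda>n. (z * (z^(Suc n)/of_nat (Suc n)) - (1/z) * (z^(Suc (Suc (Suc n)))/of_nat (Suc (Suc (Suc n)))))/2)
     sums ((z * L - (1/z) * (L - z - z^2/2))/2)"
    by (intro sums_divide sums_diff sums_mult A B)
  have eq: "z^(m+2)/of_nat((m+1)*(m+3)) = (z * (z^(Suc m)/of_nat (Suc m)) - (1/z) * (z^(Suc (Suc (Suc m)))/of_nat (Suc (Suc (Suc m)))))/2" for m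
  proof -
    have h1: "(of_nat m + 1::complex) \<noteq> 0" "(of_nat m + 3::complex) \<noteq> 0"
    proof -
      have "Re (of_nat m + 1::complex) > 0" "Re (of_nat m + 3::complex) > 0" by simp_all
      then show "(of_nat m + 1::complex) \<noteq> 0" "(of_nat m + 3::complex) \<noteq> 0" by (metis order_less_irrefl zero_complex.sel(1))+
    qed
    have e: "of_nat((m+1)*(m+3)) = (of_nat m + 1::complex) * (of_nat m + 3)" by (simp add: algebra_simps)
    have alg: "z^2 * w / ((a+1)*(a+3)) = (z * (z * w/(a+1)) - (1/z) * (z^3 * w/(a+3)))/2"
      if "a+1 \<noteq> 0" "a+3 \<noteq> 0" for a w :: complex
    proof -
      have e1: "z * (z * w/(a+1)) = z^2 * w / (a+1)" by (simp add: power2_eq_square)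
      have e2: "(1/z) * (z^3 * w/(a+3)) = z^2 * w / (a+3)" using assms(2)
        by (simp add: power2_eq_square power3_eq_cube)
      have e4: "1/(a+1) - 1/(a+3) = 2/((a+1)*(a+3))" using that
        by (simp add: divide_simps)
      have "(z * (z * w/(a+1)) - (1/z) * (z^3 * w/(a+3)))/2 = (z^2 * w / (a+1) - z^2 * w / (a+3))/2"
        by (simp only: e1 e2)
      also have "\<dots> = z^2 * w * (1/(a+1) - 1/(a+3))/2"
        by (simp add: right_diff_distrib)
      also have "\<dots> = z^2 * w / ((a+1)*(a+3))" unfolding e4 by simp
      finally show ?thesis by simp
    qed
    have e2: "of_nat (Suc m) = (of_nat m + 1::complex)" "of_nat (Suc (Suc (Suc m))) = (of_nat m + 3::complex)"
      by simp_all
    have e3: "z^(m+2) = z^2 * z^m" "z^Suc m = z * z^m" "z^(Suc (Suc (Suc m))) = z^3 * z^m"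
      by (simp_all add: power_add power_Suc numeral_3_eq_3 numeral_2_eq_2)
    show ?thesis unfolding e e2 e3 by (rule alg[OF h1])
  qed
  have V: "((z * L - (1/z) * (L - z - z^2/2))/2) = ((-(z - 1/z) * Ln(1-z) + 1 + z/2)/2)"
    using assms(2) by (simp add: L_def field_simps power2_eq_square)
  have F: "(\<lambda>m. z^(m+2)/of_nat((m+1)*(m+3))) = (\<lambda>n. (z * (z^(Suc n)/of_nat (Suc n)) - (1/z) * (z^(Suc (Suc (Suc n)))/of_nat (Suc (Suc (Suc n)))))/2)"
    using eq by (intro ext)
  show ?thesis using C unfolding F V .
qed

lemma tele: "(\<lambda>m. 1/real((m+1)*(m+3))) sums (3/4)"
proof -
  define g where "g m = 1/real (m+1) + 1/real(m+2)" for m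
  have l1: "(\<lambda>n. inverse (real (Suc n))) \<longlonglongrightarrow> 0" by (rule LIMSEQ_inverse_real_of_nat)
  have l2: "(\<lambda>n. inverse (real (Suc (Suc n)))) \<longlonglongrightarrow> 0" using LIMSEQ_Suc[OF l1] .
  have "g = (\<lambda>n. inverse (real (Suc n)) + inverse (real (Suc (Suc n))))"
    unfolding g_def by (intro ext) (simp add: divide_inverse)
  then have "g \<longlonglongrightarrow> 0" using tendsto_add[OF l1 l2] by simp
  then have "(\<lambda>n. g n - g (Suc n)) sums (g 0 - 0)" using telescope_sums'[of g 0] by simp
  then have "(\<lambda>n. (g n - g (Suc n))/2) sums ((g 0 - 0)/2)" by (rule sums_divide)
  moreover have "g 0 = 3/2" unfolding g_def by simp
  ultimately have S: "(\<lambda>n. (g n - g (Suc n))/2) sums (3/4)" by simp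
  have E: "(g n - g (Suc n))/2 = 1/real((n+1)*(n+3))" for n
  proof -
    have a: "(1/(a+1) + 1/(a+2) - (1/(a+2) + 1/(a+3)))/2 = 1/((a+1)*(a+3))" if "a \<ge> 0" for a :: real
    proof -
      have "a+1 > 0" "a+2 > 0" "a+3>0" using that by simp_all
      then have "1/(a+1) - 1/(a+3) = 2/((a+1)*(a+3))" by (simp add: divide_simps)
      moreover have "(1/(a+1) + 1/(a+2) - (1/(a+2) + 1/(a+3)))/2 = (1/(a+1) - 1/(a+3))/2" by simp
      ultimately show ?thesis by simp
    qed
    have "g n = 1/(real n+1) + 1/(real n+2)" "g (Suc n) = 1/(real n+2) + 1/(real n+3)"
      "real((n+1)*(n+3)) = (real n+1)*(real n+3)" unfolding g_def by (simp_all add: algebra_simps)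
    then show ?thesis using a[of "real n"] by (simp only:)
  qed
  show ?thesis using S unfolding E .
qed

lemma summable_M: "summable (\<lambda>m. 1/real((m+1)*(m+3)))"
  using tele sums_summable by blast

lemma cos_lt1: assumes "0 < x" "x < 2*pi" shows "cos x < 1"
proof -
  have "sin (x/2) > 0" using assms by (intro sin_gt_zero) auto
  moreover have "cos x = 1 - 2 * sin (x/2) ^ 2" using cos_double_sin[of "x/2"] by simp
  ultimately show ?thesis by simp
qed

lemma P_boundary:
  assumes "0 < x" "x < 2*pi"
  defines "w \<equiv> cis x"
  shows "(\<lambda>m. w^(m+2)/of_nat((m+1)*(m+3))) sums ((-(w - 1/w) * Ln(1 - w) + 1 + w/2)/2)"
proof -
  define f where "f m r = (complex_of_real r * w)^(m+2)/of_nat((m+1)*(m+3))" for m r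
  define Q where "Q r = (\<Sum>m. f m r)" for r
  define R where "R r = (-(complex_of_real r * w - 1/(complex_of_real r * w)) * Ln(1 - complex_of_real r * w)
      + 1 + complex_of_real r * w/2)/2" for r
  have nw: "norm w = 1" unfolding w_def by simp
  have bnd: "norm (f m r) \<le> 1/real((m+1)*(m+3))" if "r \<in> {1/2..1}" for m r
  proof -
    have "norm (f m r) = \<bar>r\<bar>^(m+2) / real((m+1)*(m+3))"
      unfolding f_def by (simp only: norm_divide norm_mult norm_power nw norm_of_nat norm_of_real) simp
    also have "\<dots> \<le> 1/real((m+1)*(m+3))" using that
      by (intro divide_right_mono power_le_one) auto
    finally show ?thesis .
  qed
  have ul: "uniform_limit {1/2..1} (\<lambda>n r. \<Sum>i<n. f i r) Q sequentially"
    unfolding Q_def by (rule Weierstrass_m_test[OF _ summable_M, of _ f]) (rule bnd)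
  have cQ: "continuous_on {1/2..1} Q"
  proof (rule uniform_limit_theorem[OF _ ul])
    have dnz: "(of_nat((m+1)*(m+3))::complex) \<noteq> 0" for m by (simp only: of_nat_eq_0_iff) simp
    have "continuous_on {1/2..1} (f m)" for m unfolding f_def
      by (rule continuous_on_divide) (auto intro!: continuous_intros simp only: dnz)
    then show "\<forall>\<^sub>F n in sequentially. continuous_on {1 / 2..1} (\<lambda>r. \<Sum>i<n. f i r)"
      by (intro always_eventually allI continuous_on_sum) auto
  qed simp
  have cR: "continuous_on {1/2..1} R"
  proof -
    have "1 - complex_of_real r * w \<notin> \<real>\<^sub>\<le>\<^sub>0" if "r \<in> {1/2..1}" for r
    proof -
      have "r * cos x < 1"
      proof (cases "r = 1")
        case True then show ?thesis using cos_lt1 assms by simp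
      next
        case False
        then have "r < 1" using that by simp
        moreover have "r * cos x \<le> r" using that cos_le_one[of x] by (simp add: mult_left_le)
        ultimately show ?thesis by simp
      qed
      then show ?thesis unfolding w_def complex_nonpos_Reals_iff by simp
    qed
    moreover have "complex_of_real r * w \<noteq> 0" if "r \<in> {1/2..1}" for r
      using that nw by (auto simp: w_def)
    ultimately show ?thesis unfolding R_def
      by (intro continuous_intros) auto
  qed
  have lQ: "(Q \<longlongrightarrow> Q 1) (at_left 1)" using continuous_on_Icc_at_leftD[OF cQ] by simp
  have lR: "(R \<longlongrightarrow> R 1) (at_left 1)" using continuous_on_Icc_at_leftD[OF cR] by simp
  have ev: "eventually (\<lambda>r. Q r = R r) (at_left (1::real))"
  proof -
    have "eventually (\<lambda>r. r \<in> {1/2<..<1}) (at_left (1::real))" by (rule eventually_at_left_real) simp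
    then show ?thesis
    proof (rule eventually_mono)
      fix r :: real assume r: "r \<in> {1/2<..<1}"
      have "norm (complex_of_real r * w) < 1" "complex_of_real r * w \<noteq> 0" using r nw by (auto simp: norm_mult)
      from P_closed[OF this] show "Q r = R r" unfolding Q_def R_def f_def by (simp add: sums_iff)
    qed
  qed
  have "(Q \<longlongrightarrow> R 1) (at_left 1)" using lR ev by (simp add: tendsto_cong)
  then have QR: "Q 1 = R 1" using lQ tendsto_unique trivial_limit_at_left_real by blast
  have sm: "summable (\<lambda>m. f m 1)"
    by (rule summable_comparison_test[OF _ summable_M]) (use bnd in auto)
  have e1: "(\<lambda>m. f m 1) = (\<lambda>m. w^(m+2)/of_nat((m+1)*(m+3)))" unfolding f_def by simp
  have e2: "R 1 = ((-(w - 1/w) * Ln(1 - w) + 1 + w/2)/2)" unfolding R_def by simp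
  from summable_sums[OF sm] have "(\<lambda>m. f m 1) sums Q 1" unfolding Q_def .
  then show ?thesis unfolding e1 QR e2 .
qed

lemma Im_Ln_boundary:
  assumes "0 < x" "x < 2*pi"
  shows "Im (Ln (1 - cis x)) = (x - pi)/2"
proof -
  define s where "s = sin (x/2)"
  define c where "c = cos (x/2)"
  have sp: "s > 0" unfolding s_def using assms by (intro sin_gt_zero) auto
  have cx: "cos x = 1 - 2 * s^2" unfolding s_def using cos_double_sin[of "x/2"] by simp
  have sx: "sin x = 2 * s * c" unfolding s_def c_def using sin_double[of "x/2"] by simp
  have "cos ((x - pi)/2) = s" unfolding s_def by (simp add: cos_diff diff_divide_distrib)
  moreover have "sin ((x - pi)/2) = - c" unfolding c_def by (simp add: sin_diff diff_divide_distrib)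
  ultimately have cs: "cis ((x - pi)/2) = Complex s (- c)" by (simp add: cis.code)
  define z where "z = complex_of_real (ln (2 * s)) + \<i> * complex_of_real ((x - pi)/2)"
  have "exp z = exp (complex_of_real (ln (2 * s))) * exp (\<i> * complex_of_real ((x - pi)/2))"
    unfolding z_def by (rule exp_add)
  also have "\<dots> = complex_of_real (2 * s) * cis ((x - pi)/2)"
    using sp by (simp only: exp_of_real exp_ln cis_conv_exp mult_2 add_pos_pos)
  also have "\<dots> = 1 - cis x"
    unfolding cs by (simp add: complex_eq_iff cx sx power2_eq_square)
  finally have ez: "exp z = 1 - cis x" .
  have iz: "Im z = (x - pi)/2" unfolding z_def by simp
  have "-pi < Im z" "Im z \<le> pi" unfolding iz using assms by simp_all
  then have "Ln (1 - cis x) = z" using Ln_exp ez by metis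
  then have "Im (Ln (1 - cis x)) = (x - pi)/2" using iz by simp
  then show ?thesis by simp
qed

lemma cos_series:
  assumes "0 \<le> x" "x \<le> 2*pi"
  shows "(\<lambda>m. cos(real(m+2)*x)/real((m+1)*(m+3))) sums (1/2 + cos x/4 - (pi - x) * sin x/2)"
proof (cases "x = 0 \<or> x = 2*pi")
  case True
  have "cos (real (m+2) * x) = 1" for m
  proof -
    have "cos (real (m+2) * (2*pi)) = 1" using cos_int_2pin[of "int (m+2)"]
      by (simp add: mult.commute mult.left_commute)
    then show ?thesis using True by auto
  qed
  then have F: "(\<lambda>m. cos(real(m+2)*x)/real((m+1)*(m+3))) = (\<lambda>m. 1/real((m+1)*(m+3)))" by simp
  have v: "1/2 + cos x/4 - (pi - x) * sin x/2 = 3/4" using True by auto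
  show ?thesis unfolding F v by (rule tele)
next
  case False
  then have x: "0 < x" "x < 2*pi" using assms by auto
  define w where "w = cis x"
  have P: "(\<lambda>m. w^(m+2)/of_nat((m+1)*(m+3))) sums ((-(w - 1/w) * Ln(1 - w) + 1 + w/2)/2)"
    unfolding w_def by (rule P_boundary[OF x])
  have re1: "Re (w^(m+2)/of_nat((m+1)*(m+3))) = cos(real(m+2)*x)/real((m+1)*(m+3))" for m
    unfolding w_def by (simp only: Complex.DeMoivre Re_divide_of_nat cis.sel)
  have wi: "w - 1/w = \<i> * complex_of_real (2 * sin x)"
    unfolding w_def by (simp add: divide_inverse complex_eq_iff del: cis_inverse)
  have IL: "Im (Ln (1 - w)) = (x - pi)/2" unfolding w_def by (rule Im_Ln_boundary[OF x])
  have "Re ((-(w - 1/w) * Ln(1 - w) + 1 + w/2)/2) = (2 * sin x * Im (Ln (1 - w)) + 1 + cos x / 2)/2"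
    unfolding wi by (simp add: w_def)
  also have "\<dots> = 1/2 + cos x/4 - (pi - x) * sin x/2" unfolding IL by (simp add: field_simps)
  finally have re2: "Re ((-(w - 1/w) * Ln(1 - w) + 1 + w/2)/2) = 1/2 + cos x/4 - (pi - x) * sin x/2" .
  show ?thesis using sums_Re[OF P] unfolding re1 re2 .
qed

locale M0 =
  fixes \<mu> :: "real measure"
  assumes sets_eq: "sets \<mu> = sets (restrict_space borel S1)"
    and fin: "finite_measure \<mu>"
    and c1: "(\<integral>\<theta>. exp (\<i> * complex_of_real \<theta>) \<partial>\<mu>) = 0"
begin

lemma space_eq: "space \<mu> = S1"
  using sets_eq_imp_space_eq[OF sets_eq] by (simp add: space_restrict_space)

lemma meas: "f \<in> borel_measurable borel \<Longrightarrow> f \<in> borel_measurable \<mu>"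
  using measurable_restrict_space1[of f borel borel S1] measurable_cong_sets[OF sets_eq refl] by blast

lemma intg:
  fixes f :: "real \<Rightarrow> 'b::{banach,second_countable_topology}"
  assumes "f \<in> borel_measurable borel" "\<And>x. x \<in> S1 \<Longrightarrow> norm (f x) \<le> B"
  shows "integrable \<mu> f"
  using finite_measure.integrable_const_bound[OF fin, of f B] assms meas space_eq
  by (auto intro!: AE_I2)

lemma S1_bound: "x \<in> S1 \<Longrightarrow> 0 \<le> x \<and> x < 2*pi" by (simp add: S1_def)

definition "Mm = measure \<mu> S1"

lemma int_const: "(\<integral>x. c \<partial>\<mu>) = Mm * c"
  by (simp add: Mm_def space_eq)

lemma Mm_nonneg: "Mm \<ge> 0" by (simp add: Mm_def)

lemma int_bound:
  fixes f :: "real \<Rightarrow> real"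
  assumes "f \<in> borel_measurable borel" "\<And>x. x \<in> S1 \<Longrightarrow> \<bar>f x\<bar> \<le> B"
  shows "\<bar>\<integral>x. f x \<partial>\<mu>\<bar> \<le> Mm * B"
proof -
  have B0: "0 \<le> B" using assms(2)[of 0] by (simp add: S1_def)
  have "\<bar>\<integral>x. f x \<partial>\<mu>\<bar> \<le> (\<integral>x. \<bar>f x\<bar> \<partial>\<mu>)" by (rule integral_abs_bound)
  also have "\<dots> \<le> (\<integral>x. B \<partial>\<mu>)"
    using assms B0 by (intro integral_mono intg[of _ B]) (auto simp: space_eq)
  finally show ?thesis by (simp add: Mm_def space_eq)
qed

lemma sums_int:
  fixes f :: "nat \<Rightarrow> real \<Rightarrow> real"
  assumes m: "\<And>i. f i \<in> borel_measurable borel"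
    and b: "\<And>i x. x \<in> S1 \<Longrightarrow> \<bar>f i x\<bar> \<le> b i" and sb: "summable b"
  shows "(\<lambda>i. \<integral>x. f i x \<partial>\<mu>) sums (\<integral>x. (\<Sum>i. f i x) \<partial>\<mu>)"
proof (rule sums_integral)
  show "integrable \<mu> (f i)" for i using intg[OF m, of i "b i"] b by simp
  show "AE x in \<mu>. summable (\<lambda>i. norm (f i x))"
    using b by (intro AE_I2 summable_comparison_test[OF _ sb]) (auto simp: space_eq)
  show "summable (\<lambda>i. \<integral>x. norm (f i x) \<partial>\<mu>)"
  proof (rule summable_comparison_test[OF _ summable_mult[OF sb, of Mm]])
    show "\<exists>N. \<forall>n\<ge>N. norm (\<integral>x. norm (f n x) \<partial>\<mu>) \<le> Mm * b n"
      using int_bound[of "\<lambda>x. norm (f _ x)"] m b by (auto intro!: exI[of _ 0])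
  qed
qed

lemma intg_suminf:
  fixes f :: "nat \<Rightarrow> real \<Rightarrow> real"
  assumes m: "\<And>i. f i \<in> borel_measurable borel"
    and b: "\<And>i x. x \<in> S1 \<Longrightarrow> \<bar>f i x\<bar> \<le> b i" and sb: "summable b"
  shows "integrable \<mu> (\<lambda>x. \<Sum>i. f i x)"
proof (rule integrable_suminf)
  show "integrable \<mu> (f i)" for i using intg[OF m, of i "b i"] b by simp
  show "AE x in \<mu>. summable (\<lambda>i. norm (f i x))"
    using b by (intro AE_I2 summable_comparison_test[OF _ sb]) (auto simp: space_eq)
  show "summable (\<lambda>i. \<integral>x. norm (f i x) \<partial>\<mu>)"
  proof (rule summable_comparison_test[OF _ summable_mult[OF sb, of Mm]])
    show "\<exists>N. \<forall>n\<ge>N. norm (\<integral>x. norm (f n x) \<partial>\<mu>) \<le> Mm * b n"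
      using int_bound[of "\<lambda>x. norm (f _ x)"] m b by (auto intro!: exI[of _ 0])
  qed
qed

lemma intc:
  fixes f :: "real \<Rightarrow> 'b::{banach,second_countable_topology}"
  assumes "continuous_on UNIV f"
  shows "integrable \<mu> f"
proof -
  have "compact (f ` {0..2*pi})" using assms by (intro compact_continuous_image continuous_on_subset[OF assms]) auto
  then obtain B where B: "\<And>y. y \<in> f ` {0..2*pi} \<Longrightarrow> norm y \<le> B"
    using compact_imp_bounded bounded_iff by metis
  show ?thesis
    by (rule intg[OF borel_measurable_continuous_onI[OF assms], of B]) (auto intro: B simp: S1_def)
qed

end

definition dd :: "nat \<Rightarrow> real" where "dd m = real((m+1)*(m+3))"

lemma dd_pos: "dd m > 0" unfolding dd_def by (simp only: of_nat_0_less_iff) simp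

lemma summable_dd: "summable (\<lambda>m. c / dd m)"
  using summable_mult[OF summable_M, of c] by (simp add: dd_def)

lemma kernel:
  assumes "\<bar>y\<bar> \<le> 2*pi"
  shows "sin \<bar>y\<bar> = 1/pi - (2/pi) * (\<Sum>m. cos(real(m+2)*y)/dd m) + cos y/(2*pi) + y * sin y/pi"
proof -
  define d where "d = \<bar>y\<bar>"
  have d: "0 \<le> d" "d \<le> 2*pi" using assms by (auto simp: d_def)
  have cy: "cos(k*y) = cos(k*d)" for k unfolding d_def by (cases "y \<ge> 0") auto
  have ys: "y * sin y = d * sin d" unfolding d_def by (cases "y \<ge> 0") auto
  have "(\<Sum>m. cos(real(m+2)*y)/dd m) = 1/2 + cos d/4 - (pi - d) * sin d/2"
    using cos_series[OF d] unfolding cy dd_def by (simp add: sums_iff)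
  moreover have "cos y = cos d" using cy[of 1] by simp
  ultimately show ?thesis unfolding ys d_def[symmetric]
    by (simp add: field_simps)
qed

context M0 begin

definition "Cr k = (\<integral>\<theta>. cos (k*\<theta>) \<partial>\<mu>)"
definition "Sr k = (\<integral>\<theta>. sin (k*\<theta>) \<partial>\<mu>)"
definition "Aa = (\<integral>\<theta>. \<theta> * cos \<theta> \<partial>\<mu>)"
definition "Bb = (\<integral>\<theta>. \<theta> * sin \<theta> \<partial>\<mu>)"

lemma C1: "Cr 1 = 0" and S1': "Sr 1 = 0"
proof -
  have i: "integrable \<mu> (\<lambda>\<theta>. exp (\<i> * complex_of_real \<theta>))" by (intro intc continuous_intros)
  have "Re (\<integral>\<theta>. exp (\<i> * complex_of_real \<theta>) \<partial>\<mu>) = Cr 1"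
    unfolding Cr_def integral_Re[OF i, symmetric] by (simp add: Re_exp)
  then show "Cr 1 = 0" using c1 by simp
  have "Im (\<integral>\<theta>. exp (\<i> * complex_of_real \<theta>) \<partial>\<mu>) = Sr 1"
    unfolding Sr_def integral_Im[OF i, symmetric] by (simp add: Im_exp)
  then show "Sr 1 = 0" using c1 by simp
qed

lemma int_cos_diff: "(\<integral>\<alpha>. cos (k*(\<theta>-\<alpha>)) \<partial>\<mu>) = cos (k*\<theta>) * Cr k + sin (k*\<theta>) * Sr k"
proof -
  have "(\<integral>\<alpha>. cos (k*(\<theta>-\<alpha>)) \<partial>\<mu>) = (\<integral>\<alpha>. cos (k*\<theta>) * cos (k*\<alpha>) + sin (k*\<theta>) * sin (k*\<alpha>) \<partial>\<mu>)"
    by (simp add: right_diff_distrib cos_diff)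
  also have "\<dots> = cos (k*\<theta>) * Cr k + sin (k*\<theta>) * Sr k"
    unfolding Cr_def Sr_def
    by (subst Bochner_Integration.integral_add) (auto intro!: intc continuous_intros)
  finally show ?thesis .
qed

lemma int_lin: "(\<integral>\<alpha>. (\<theta>-\<alpha>) * sin (\<theta>-\<alpha>) \<partial>\<mu>) = cos \<theta> * Bb - sin \<theta> * Aa"
proof -
  have "(\<integral>\<alpha>. (\<theta>-\<alpha>) * sin (\<theta>-\<alpha>) \<partial>\<mu>) =
     (\<integral>\<alpha>. (\<theta> * sin \<theta>) * cos \<alpha> - (\<theta> * cos \<theta>) * sin \<alpha> - (sin \<theta> * (\<alpha> * cos \<alpha>) - cos \<theta> * (\<alpha> * sin \<alpha>)) \<partial>\<mu>)"
    by (rule Bochner_Integration.integral_cong) (auto simp: sin_diff algebra_simps)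
  also have "\<dots> = (\<theta> * sin \<theta>) * Cr 1 - (\<theta> * cos \<theta>) * Sr 1 - (sin \<theta> * Aa - cos \<theta> * Bb)"
    unfolding Cr_def Sr_def Aa_def Bb_def
    by (subst Bochner_Integration.integral_diff integral_mult_right_zero, (auto intro!: intc continuous_intros)[2])+ simp
  finally show ?thesis using C1 S1' by simp
qed

end

context M0 begin

definition "hh m \<theta> = (cos (real(m+2)*\<theta>) * Cr (real(m+2)) + sin (real(m+2)*\<theta>) * Sr (real(m+2))) / dd m"

lemma inner:
  assumes th: "\<theta> \<in> S1"
  shows "(\<integral>\<alpha>. sin \<bar>\<theta>-\<alpha>\<bar> \<partial>\<mu>) = Mm/pi - (2/pi) * (\<Sum>m. hh m \<theta>) + (cos \<theta> * Bb - sin \<theta> * Aa)/pi"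
proof -
  define g where "g m \<alpha> = cos(real(m+2)*(\<theta>-\<alpha>))/dd m" for m \<alpha>
  have gm: "g m \<in> borel_measurable borel" for m unfolding g_def
    by (intro borel_measurable_continuous_onI continuous_intros) (use dd_pos[of m] in auto)
  have gb: "\<bar>g m \<alpha>\<bar> \<le> 1/dd m" for m \<alpha> unfolding g_def using dd_pos[of m]
    by (simp add: abs_div divide_right_mono)
  have Gi: "integrable \<mu> (\<lambda>\<alpha>. \<Sum>m. g m \<alpha>)" by (rule intg_suminf[OF gm gb summable_dd])
  have Gs: "(\<lambda>m. \<integral>\<alpha>. g m \<alpha> \<partial>\<mu>) sums (\<integral>\<alpha>. (\<Sum>m. g m \<alpha>) \<partial>\<mu>)" by (rule sums_int[OF gm gb summable_dd])
  have "(\<integral>\<alpha>. g m \<alpha> \<partial>\<mu>) = hh m \<theta>" for m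
    unfolding g_def hh_def integral_divide_zero int_cos_diff ..
  then have G: "(\<integral>\<alpha>. (\<Sum>m. g m \<alpha>) \<partial>\<mu>) = (\<Sum>m. hh m \<theta>)" using Gs by (simp add: sums_iff)
  have "(\<integral>\<alpha>. sin \<bar>\<theta>-\<alpha>\<bar> \<partial>\<mu>) = (\<integral>\<alpha>. 1/pi - (2/pi) * (\<Sum>m. g m \<alpha>) + cos (\<theta>-\<alpha>)/(2*pi) + (\<theta>-\<alpha>) * sin (\<theta>-\<alpha>)/pi \<partial>\<mu>)"
  proof (rule Bochner_Integration.integral_cong[OF refl])
    fix \<alpha> assume "\<alpha> \<in> space \<mu>"
    then have "\<bar>\<theta>-\<alpha>\<bar> \<le> 2*pi" using th by (auto simp: space_eq S1_def)
    from kernel[OF this] show "sin \<bar>\<theta>-\<alpha>\<bar> = 1/pi - (2/pi) * (\<Sum>m. g m \<alpha>) + cos (\<theta>-\<alpha>)/(2*pi) + (\<theta>-\<alpha>) * sin (\<theta>-\<alpha>)/pi"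
      unfolding g_def by simp
  qed
  also have "\<dots> = Mm/pi - (2/pi) * (\<integral>\<alpha>. (\<Sum>m. g m \<alpha>) \<partial>\<mu>) + (\<integral>\<alpha>. cos (\<theta>-\<alpha>) \<partial>\<mu>)/(2*pi) + (\<integral>\<alpha>. (\<theta>-\<alpha>) * sin (\<theta>-\<alpha>) \<partial>\<mu>)/pi"
  proof -
    have ia: "integrable \<mu> (\<lambda>\<alpha>. 1/pi)" by (intro intc continuous_intros)
    have ib: "integrable \<mu> (\<lambda>\<alpha>. (2/pi) * (\<Sum>m. g m \<alpha>))" using Gi by (rule integrable_mult_right)
    have ic: "integrable \<mu> (\<lambda>\<alpha>. cos (\<theta>-\<alpha>)/(2*pi))" by (intro intc continuous_intros) auto
    have ie: "integrable \<mu> (\<lambda>\<alpha>. (\<theta>-\<alpha>) * sin (\<theta>-\<alpha>)/pi)" by (intro intc continuous_intros) auto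
    have "(\<integral>\<alpha>. 1/pi - (2/pi) * (\<Sum>m. g m \<alpha>) + cos (\<theta>-\<alpha>)/(2*pi) + (\<theta>-\<alpha>) * sin (\<theta>-\<alpha>)/pi \<partial>\<mu>)
       = (\<integral>\<alpha>. 1/pi - (2/pi) * (\<Sum>m. g m \<alpha>) + cos (\<theta>-\<alpha>)/(2*pi) \<partial>\<mu>) + (\<integral>\<alpha>. (\<theta>-\<alpha>) * sin (\<theta>-\<alpha>)/pi \<partial>\<mu>)"
      using ia ib ic ie by (intro Bochner_Integration.integral_add) auto
    also have "(\<integral>\<alpha>. 1/pi - (2/pi) * (\<Sum>m. g m \<alpha>) + cos (\<theta>-\<alpha>)/(2*pi) \<partial>\<mu>)
       = (\<integral>\<alpha>. 1/pi - (2/pi) * (\<Sum>m. g m \<alpha>) \<partial>\<mu>) + (\<integral>\<alpha>. cos (\<theta>-\<alpha>)/(2*pi) \<partial>\<mu>)"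
      using ia ib ic by (intro Bochner_Integration.integral_add) auto
    also have "(\<integral>\<alpha>. 1/pi - (2/pi) * (\<Sum>m. g m \<alpha>) \<partial>\<mu>) = (\<integral>\<alpha>. 1/pi \<partial>\<mu>) - (\<integral>\<alpha>. (2/pi) * (\<Sum>m. g m \<alpha>) \<partial>\<mu>)"
      using ia ib by (intro Bochner_Integration.integral_diff) auto
    finally show ?thesis by (simp add: Mm_def space_eq)
  qed
  also have "(\<integral>\<alpha>. cos (\<theta>-\<alpha>) \<partial>\<mu>) = 0" using int_cos_diff[of 1 \<theta>] C1 S1' by simp
  finally show ?thesis unfolding G int_lin by simp
qed

end

context M0 begin

lemma Cr_bound: "\<bar>Cr k\<bar> \<le> Mm" and Sr_bound: "\<bar>Sr k\<bar> \<le> Mm"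
  using int_bound[of "\<lambda>\<theta>. cos (k*\<theta>)" 1] int_bound[of "\<lambda>\<theta>. sin (k*\<theta>)" 1]
  unfolding Cr_def Sr_def by (auto intro!: borel_measurable_continuous_onI continuous_intros)

definition "TT m = (Cr (real(m+2))^2 + Sr (real(m+2))^2) / dd m"

lemma outer:
  "(\<integral>\<theta>. (\<integral>\<alpha>. sin \<bar>\<theta>-\<alpha>\<bar> \<partial>\<mu>) \<partial>\<mu>) = Mm^2/pi - (2/pi) * (\<Sum>m. TT m)"
    and TT_sums: "TT sums (\<Sum>m. TT m)"
proof -
  have hm: "hh m \<in> borel_measurable borel" for m unfolding hh_def
    by (intro borel_measurable_continuous_onI continuous_intros) (use dd_pos[of m] in auto)
  have hb: "\<bar>hh m \<theta>\<bar> \<le> (2*Mm) / dd m" for m \<theta>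
  proof -
    have "\<bar>cos (real(m+2)*\<theta>) * Cr (real(m+2)) + sin (real(m+2)*\<theta>) * Sr (real(m+2))\<bar> \<le> 1 * Mm + 1 * Mm"
      by (rule order_trans[OF abs_triangle_ineq]) (intro add_mono, simp_all only: abs_mult,
          (intro mult_mono; simp add: Cr_bound Sr_bound)+)
    then show ?thesis unfolding hh_def using dd_pos[of m] by (simp add: abs_div divide_right_mono)
  qed
  have Hi: "integrable \<mu> (\<lambda>\<theta>. \<Sum>m. hh m \<theta>)" by (rule intg_suminf[OF hm hb summable_dd])
  have Hs: "(\<lambda>m. \<integral>\<theta>. hh m \<theta> \<partial>\<mu>) sums (\<integral>\<theta>. (\<Sum>m. hh m \<theta>) \<partial>\<mu>)" by (rule sums_int[OF hm hb summable_dd])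
  have ih: "(\<integral>\<theta>. hh m \<theta> \<partial>\<mu>) = TT m" for m
  proof -
    have "(\<integral>\<theta>. hh m \<theta> \<partial>\<mu>) = (\<integral>\<theta>. cos (real(m+2)*\<theta>) * Cr (real(m+2)) + sin (real(m+2)*\<theta>) * Sr (real(m+2)) \<partial>\<mu>) / dd m"
      unfolding hh_def by (rule integral_divide_zero)
    also have "(\<integral>\<theta>. cos (real(m+2)*\<theta>) * Cr (real(m+2)) + sin (real(m+2)*\<theta>) * Sr (real(m+2)) \<partial>\<mu>)
       = Cr (real(m+2))^2 + Sr (real(m+2))^2"
      by (subst Bochner_Integration.integral_add) (auto intro!: intc continuous_intros simp: power2_eq_square Cr_def Sr_def)
    finally show ?thesis unfolding TT_def .
  qed
  show TS: "TT sums (\<Sum>m. TT m)" using Hs unfolding ih by (simp add: sums_iff)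
  have H: "(\<integral>\<theta>. (\<Sum>m. hh m \<theta>) \<partial>\<mu>) = (\<Sum>m. TT m)" using Hs unfolding ih by (simp add: sums_iff)
  have "(\<integral>\<theta>. (\<integral>\<alpha>. sin \<bar>\<theta>-\<alpha>\<bar> \<partial>\<mu>) \<partial>\<mu>) =
        (\<integral>\<theta>. Mm/pi - (2/pi) * (\<Sum>m. hh m \<theta>) + (cos \<theta> * Bb - sin \<theta> * Aa)/pi \<partial>\<mu>)"
    by (rule Bochner_Integration.integral_cong[OF refl]) (simp add: inner space_eq)
  also have "\<dots> = Mm * (Mm/pi) - (2/pi) * (\<Sum>m. TT m) + (Cr 1 * Bb - Sr 1 * Aa)/pi"
  proof -
    have ia: "integrable \<mu> (\<lambda>\<theta>. Mm/pi)" by (intro intc continuous_intros)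
    have ib: "integrable \<mu> (\<lambda>\<theta>. (2/pi) * (\<Sum>m. hh m \<theta>))" using Hi by (rule integrable_mult_right)
    have ic: "integrable \<mu> (\<lambda>\<theta>. (cos \<theta> * Bb - sin \<theta> * Aa)/pi)" by (intro intc continuous_intros) auto
    have "(\<integral>\<theta>. Mm/pi - (2/pi) * (\<Sum>m. hh m \<theta>) + (cos \<theta> * Bb - sin \<theta> * Aa)/pi \<partial>\<mu>)
       = (\<integral>\<theta>. Mm/pi - (2/pi) * (\<Sum>m. hh m \<theta>) \<partial>\<mu>) + (\<integral>\<theta>. (cos \<theta> * Bb - sin \<theta> * Aa)/pi \<partial>\<mu>)"
      using ia ib ic by (intro Bochner_Integration.integral_add) auto
    also have "(\<integral>\<theta>. Mm/pi - (2/pi) * (\<Sum>m. hh m \<theta>) \<partial>\<mu>) = (\<integral>\<theta>. Mm/pi \<partial>\<mu>) - (\<integral>\<theta>. (2/pi) * (\<Sum>m. hh m \<theta>) \<partial>\<mu>)"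
      using ia ib by (intro Bochner_Integration.integral_diff) auto
    also have "(\<integral>\<theta>. (cos \<theta> * Bb - sin \<theta> * Aa)/pi \<partial>\<mu>) = (Cr 1 * Bb - Sr 1 * Aa)/pi"
    proof -
      have "(\<integral>\<theta>. (cos \<theta> * Bb - sin \<theta> * Aa) \<partial>\<mu>) = Cr 1 * Bb - Sr 1 * Aa"
        unfolding Cr_def Sr_def
        by (subst Bochner_Integration.integral_diff) (auto intro!: intc continuous_intros)
      then show ?thesis by simp
    qed
    finally show ?thesis using H by (simp add: Mm_def space_eq)
  qed
  finally show "(\<integral>\<theta>. (\<integral>\<alpha>. sin \<bar>\<theta>-\<alpha>\<bar> \<partial>\<mu>) \<partial>\<mu>) = Mm^2/pi - (2/pi) * (\<Sum>m. TT m)"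
    using C1 S1' by (simp add: power2_eq_square)
qed

end

context M0 begin

lemma fc: "(cmod (fourier_coeff \<mu> n))^2 = (Cr (of_int n)^2 + Sr (of_int n)^2)/(4*pi^2)"
proof -
  define I where "I = (\<integral>\<theta>. exp (- \<i> * of_int n * complex_of_real \<theta>) \<partial>\<mu>)"
  have i: "integrable \<mu> (\<lambda>\<theta>. exp (- \<i> * of_int n * complex_of_real \<theta>))" by (intro intc continuous_intros)
  have "Re I = (\<integral>\<theta>. Re (exp (- \<i> * of_int n * complex_of_real \<theta>)) \<partial>\<mu>)"
    unfolding I_def by (rule integral_Re[OF i, symmetric])
  also have "\<dots> = Cr (of_int n)" unfolding Cr_def by (simp add: Re_exp)
  finally have re: "Re I = Cr (of_int n)" .
  have "Im I = (\<integral>\<theta>. Im (exp (- \<i> * of_int n * complex_of_real \<theta>)) \<partial>\<mu>)"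
    unfolding I_def by (rule integral_Im[OF i, symmetric])
  also have "\<dots> = - Sr (of_int n)" unfolding Sr_def by (simp add: Im_exp)
  finally have im: "Im I = - Sr (of_int n)" .
  have "fourier_coeff \<mu> n = complex_of_real (1/(2*pi)) * I" unfolding fourier_coeff_def I_def ..
  then have "cmod (fourier_coeff \<mu> n) = (1/(2*pi)) * cmod I" by (simp add: norm_divide norm_mult)
  then have "(cmod (fourier_coeff \<mu> n))^2 = (cmod I)^2 / (4*pi^2)" by (simp add: power_divide power_mult_distrib)
  also have "(cmod I)^2 = Cr (of_int n)^2 + Sr (of_int n)^2" unfolding cmod_power2 re im by simp
  finally show ?thesis .
qed

lemma Cr_neg: "Cr (-k) = Cr k" and Sr_neg: "Sr (-k) = - Sr k"
  unfolding Cr_def Sr_def by simp_all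

lemma Cr0: "Cr 0 = Mm" and Sr0: "Sr 0 = 0"
  unfolding Cr_def Sr_def by (simp_all add: Mm_def space_eq)

lemma TT_nonneg: "TT m \<ge> 0" unfolding TT_def using dd_pos[of m] by simp

lemma main_loc:
  "((\<lambda>n::int. pi * (cmod (fourier_coeff \<mu> n))^2 / (1 - (real_of_int n)^2))
           has_sum ((1/4) * (\<integral>\<theta>. (\<integral>\<alpha>. sin \<bar>\<theta> - \<alpha>\<bar> \<partial>\<mu>) \<partial>\<mu>)))
         {n. n \<noteq> 1 \<and> n \<noteq> -1}"
proof -
  define f where "f n = pi * (cmod (fourier_coeff \<mu> n))^2 / (1 - (real_of_int n)^2)" for n :: int
  define Sg where "Sg = (\<Sum>m. TT m)"
  have fT: "f n = (Cr (of_int n)^2 + Sr (of_int n)^2) / (4 * pi * (1 - (real_of_int n)^2))" for n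
  proof -
    have "pi * (X/(4*pi^2)) / D = X/(4*pi*D)" for X D :: real
    proof -
      have "pi * (X/(4*pi^2)) = X/(4*pi)" by (simp add: power2_eq_square)
      then show ?thesis by simp
    qed
    then show ?thesis unfolding f_def fc .
  qed
  have d: "1 - (real m + 2)^2 = - dd m" for m unfolding dd_def by (simp add: power2_eq_square algebra_simps)
  have fp: "f (int m + 2) = - TT m / (4*pi)" for m
  proof -
    have e: "real_of_int (int m + 2) = real m + 2" "real (m+2) = real m + 2" by simp_all
    have g: "X/(4*pi*(-D)) = -(X/D)/(4*pi)" if "D > 0" for X D :: real
      using that by (simp add: field_simps)
    show ?thesis unfolding fT TT_def e d using g[OF dd_pos[of m]] by simp
  qed
  have fn: "f (- int m - 2) = - TT m / (4*pi)" for m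
  proof -
    have e: "real_of_int (- int m - 2) = - real_of_int (int m + 2)" by simp
    have "f (- int m - 2) = f (int m + 2)" unfolding fT e Cr_neg Sr_neg power2_minus ..
    then show ?thesis using fp by simp
  qed
  have hn: "((\<lambda>m. - TT m / (4*pi)) has_sum (- Sg / (4*pi))) UNIV"
  proof (rule norm_summable_imp_has_sum)
    show "(\<lambda>m. - TT m / (4*pi)) sums (- Sg / (4*pi))"
      using sums_divide[OF sums_minus[OF TT_sums], of "4*pi"] unfolding Sg_def by simp
    show "summable (\<lambda>m. norm (- TT m / (4*pi)))"
      using summable_divide[OF sums_summable[OF TT_sums], of "4*pi"] TT_nonneg by (simp add: abs_of_nonneg)
  qed
  have b1: "bij_betw (\<lambda>m. int m + 2) UNIV {2..}"
    by (rule bij_betwI[where g="\<lambda>n. nat (n-2)"]) auto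
  have b2: "bij_betw (\<lambda>m. - int m - 2) UNIV {..-2}"
    by (rule bij_betwI[where g="\<lambda>n. nat (-n-2)"]) auto
  have h1: "(f has_sum (- Sg / (4*pi))) {2..}"
    using hn unfolding has_sum_reindex_bij_betw[OF b1, symmetric] fp .
  have h2: "(f has_sum (- Sg / (4*pi))) {..-2}"
    using hn unfolding has_sum_reindex_bij_betw[OF b2, symmetric] fn .
  have h12: "(f has_sum (- Sg / (4*pi) + - Sg / (4*pi))) ({2..} \<union> {..-2})"
    by (rule has_sum_Un_disjoint[OF h1 h2]) auto
  have h: "(f has_sum (f 0 + (- Sg / (4*pi) + - Sg / (4*pi)))) (insert 0 ({2..} \<union> {..-2}))"
    by (rule has_sum_insert[OF _ h12]) auto
  have setq: "insert 0 ({2..} \<union> {..-2}) = {n::int. n \<noteq> 1 \<and> n \<noteq> -1}"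
    by (rule set_eqI) (simp, arith)
  have f0: "f 0 = Mm^2 / (4*pi)" unfolding fT by (simp add: Cr0 Sr0)
  have val: "f 0 + (- Sg / (4*pi) + - Sg / (4*pi)) = (1/4) * (\<integral>\<theta>. (\<integral>\<alpha>. sin \<bar>\<theta> - \<alpha>\<bar> \<partial>\<mu>) \<partial>\<mu>)"
    unfolding outer f0 Sg_def by (simp add: algebra_simps diff_divide_distrib add_divide_distrib power2_eq_square)
  have h': "(f has_sum ((1/4) * (\<integral>\<theta>. (\<integral>\<alpha>. sin \<bar>\<theta> - \<alpha>\<bar> \<partial>\<mu>) \<partial>\<mu>))) {n::int. n \<noteq> 1 \<and> n \<noteq> -1}"
    using h unfolding setq val .
  show ?thesis using h' unfolding f_def[abs_def] .
qed

end

theorem proposition4p5: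
  fixes \<mu> :: "real measure"
  assumes "\<mu> \<in> M0plus"
  shows "((\<lambda>n::int. pi * (cmod (fourier_coeff \<mu> n))^2 / (1 - (real_of_int n)^2))
           has_sum ((1/4) * (\<integral>\<theta>. (\<integral>\<alpha>. sin \<bar>\<theta> - \<alpha>\<bar> \<partial>\<mu>) \<partial>\<mu>)))
         {n. n \<noteq> 1 \<and> n \<noteq> -1}"
proof -
  have "sets \<mu> = sets (restrict_space borel S1)" "finite_measure \<mu>"
    "(\<integral>\<theta>. exp (\<i> * complex_of_real \<theta>) \<partial>\<mu>) = 0"
    using assms unfolding M0plus_def mem_Collect_eq by blast+
  then interpret M0 \<mu> by (rule M0.intro)
  show ?thesis by (rule main_loc)
qed

end
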